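(* Let $p$ be a prime, $q$ a power of $p$, $F$ a field of characteristic $p$ containing $\mathbb{F}_q$, and $L\in F[x]$ a $q$-polynomial of $q$-degree $n$ with no repeated roots in its splitting field $E$ over $F$; let $v_1,\dots,v_n$ be an ordered $\mathbb{F}_q$-basis of the space of roots of $L$. For $r\geq1$ let $\epsilon_r:H_{n,r}(\mathbb{F}_q)\to E$, $\epsilon_r(P)=P(v_1,\dots,v_n)$. If $\epsilon_r$ is not injective, then $\epsilon_t$ is not injective for all $t\geq r$.
   Context: $H_{n,r}(\mathbb{F}_q)$ is the space of homogeneous polynomials of degree $r$ in $\mathbb{F}_q[x_1,\dots,x_n]$ together with $0$. A $q$-polynomial of $q$-degree $n$ is $\sum_{i=0}^n a_ix^{q^i}$ with $a_n\neq0$. *)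

theory Defs
  imports "HOL-Computational_Algebra.Polynomial"
begin

definition is_subfield :: "'a::field set \<Rightarrow> bool" where
  "is_subfield K \<longleftrightarrow> 0 \<in> K \<and> 1 \<in> K \<and>
     (\<forall>x\<in>K. \<forall>y\<in>K. x + y \<in> K \<and> x * y \<in> K) \<and>
     (\<forall>x\<in>K. - x \<in> K \<and> inverse x \<in> K)"

definition Fq_in :: "'a::field set \<Rightarrow> nat \<Rightarrow> 'a set" where
  "Fq_in F q = {x \<in> F. x ^ q = x}"

definition is_q_polynomial :: "'a::field set \<Rightarrow> nat \<Rightarrow> nat \<Rightarrow> 'a poly \<Rightarrow> bool" where
  "is_q_polynomial F q n L \<longleftrightarrow> (\<exists>a. (\<forall>i\<le>n. a i \<in> F) \<and> a n \<noteq> 0 \<and>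
      L = (\<Sum>i\<le>n. monom (a i) (q ^ i)))"

definition is_splitting_field :: "'a::field set \<Rightarrow> 'a set \<Rightarrow> 'a poly \<Rightarrow> bool" where
  "is_splitting_field F E L \<longleftrightarrow> is_subfield F \<and> is_subfield E \<and> F \<subseteq> E \<and> L \<noteq> 0 \<and>
     (\<forall>i. coeff L i \<in> F) \<and>
     (\<exists>c rs. set rs \<subseteq> E \<and> L = smult c (\<Prod>r\<leftarrow>rs. [:- r, 1:])) \<and>
     E = \<Inter>{K. is_subfield K \<and> F \<union> {x. poly L x = 0} \<subseteq> K}"

definition monomials :: "nat \<Rightarrow> nat \<Rightarrow> (nat \<Rightarrow> nat) set" where
  "monomials n r = {\<alpha>. (\<forall>i\<ge>n. \<alpha> i = 0) \<and> (\<Sum>i<n. \<alpha> i) = r}"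

text \<open>H_{n,r}(K): homogeneous polynomials of degree r (together with 0) with coefficients
  in K, represented by their coefficient functions on exponent vectors.\<close>
definition hom_polys :: "'a::field set \<Rightarrow> nat \<Rightarrow> nat \<Rightarrow> ((nat \<Rightarrow> nat) \<Rightarrow> 'a) set" where
  "hom_polys K n r = {c. (\<forall>\<alpha>. c \<alpha> \<in> K) \<and> (\<forall>\<alpha>. \<alpha> \<notin> monomials n r \<longrightarrow> c \<alpha> = 0)}"

definition eval_hom :: "nat \<Rightarrow> nat \<Rightarrow> (nat \<Rightarrow> 'a::field) \<Rightarrow> ((nat \<Rightarrow> nat) \<Rightarrow> 'a) \<Rightarrow> 'a" where
  "eval_hom n r v c = (\<Sum>\<alpha>\<in>monomials n r. c \<alpha> * (\<Prod>i<n. v i ^ \<alpha> i))"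

end

theory Submission
  imports Defs "HOL-Library.FuncSet"
begin

lemma fin_mon: "finite (monomials n r)"
proof -
  have "monomials n r \<subseteq> (\<lambda>f i. if i<n then f i else 0) ` ({..<n} \<rightarrow>\<^sub>E {..r})"
  proof
    fix \<alpha> assume a: "\<alpha> \<in> monomials n r"
    have le: "\<alpha> i \<le> r" if "i < n" for i
    proof -
      have "\<alpha> i \<le> (\<Sum>j<n. \<alpha> j)" using that by (intro member_le_sum) auto
      thus ?thesis using a by (simp add: monomials_def)
    qed
    have "restrict \<alpha> {..<n} \<in> {..<n} \<rightarrow>\<^sub>E {..r}" using le by auto
    moreover have "\<alpha> = (\<lambda>i. if i<n then restrict \<alpha> {..<n} i else 0)"
      using a by (auto simp: monomials_def fun_eq_iff)
    ultimately show "\<alpha> \<in> (\<lambda>f i. if i<n then f i else 0) ` ({..<n} \<rightarrow>\<^sub>E {..r})" by blast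
  qed
  then show ?thesis by (rule finite_subset) (auto intro: finite_PiE)
qed

definition sh :: "nat \<Rightarrow> ((nat \<Rightarrow> nat) \<Rightarrow> 'a::field) \<Rightarrow> (nat \<Rightarrow> nat) \<Rightarrow> 'a" where
  "sh d c \<alpha> = (if d \<le> \<alpha> 0 then c (\<alpha>(0 := \<alpha> 0 - d)) else 0)"

lemma sh_inj: "sh d c1 = sh d c2 \<Longrightarrow> c1 = c2"
proof (rule ext)
  fix \<beta> assume "sh d c1 = sh d c2"
  hence "sh d c1 (\<beta>(0 := \<beta> 0 + d)) = sh d c2 (\<beta>(0 := \<beta> 0 + d))" by simp
  thus "c1 \<beta> = c2 \<beta>" by (simp add: sh_def)
qed

lemma sum_shift: "(n::nat) \<ge> 1 \<Longrightarrow> (\<Sum>i<n. (\<beta>(0 := \<beta> 0 + d)) i) = (\<Sum>i<n. \<beta> i) + (d::nat)"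
proof -
  assume "n \<ge> 1" then obtain m where n: "n = Suc m" by (cases n) auto
  show ?thesis unfolding n sum.lessThan_Suc_shift by simp
qed

lemma prod_shift: "(n::nat) \<ge> 1 \<Longrightarrow> (\<Prod>i<n. v i ^ (\<beta>(0 := \<beta> 0 + d)) i) = v 0 ^ d * (\<Prod>i<n. (v i::'a::field) ^ \<beta> i)"
proof -
  assume "n \<ge> 1" then obtain m where n: "n = Suc m" by (cases n) auto
  show ?thesis unfolding n prod.lessThan_Suc_shift by (simp add: power_add mult_ac)
qed

lemma sh_hom:
  assumes "n \<ge> 1" "0 \<in> K" "c \<in> hom_polys K n r"
  shows "sh d c \<in> hom_polys K n (r + d)"
  unfolding hom_polys_def
proof (intro CollectI conjI allI impI)
  fix \<alpha> show "sh d c \<alpha> \<in> K" using assms by (auto simp: sh_def hom_polys_def)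
next
  fix \<alpha> assume na: "\<alpha> \<notin> monomials n (r + d)"
  show "sh d c \<alpha> = 0"
  proof (cases "d \<le> \<alpha> 0")
    case True
    let ?b = "\<alpha>(0 := \<alpha> 0 - d)"
    have "?b \<notin> monomials n r"
    proof
      assume b: "?b \<in> monomials n r"
      have e: "\<alpha> = ?b(0 := ?b 0 + d)" using True by auto
      have "(\<Sum>i<n. \<alpha> i) = (\<Sum>i<n. ?b i) + d" 
        using sum_shift[OF assms(1), of ?b d] e by metis
      hence "(\<Sum>i<n. \<alpha> i) = r + d" using b by (simp add: monomials_def)
      moreover have "\<forall>i\<ge>n. \<alpha> i = 0" using b assms(1)
        by (auto simp: monomials_def split: if_splits)
      ultimately show False using na by (simp add: monomials_def)
    qed
    then show ?thesis using True assms(3) by (simp add: sh_def hom_polys_def)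
  qed (simp add: sh_def)
qed

lemma sh_eval:
  assumes "n \<ge> 1"
  shows "eval_hom n (r + d) v (sh d c) = v 0 ^ d * eval_hom n r v c"
proof -
  let ?g = "\<lambda>\<beta>::nat\<Rightarrow>nat. \<beta>(0 := \<beta> 0 + d)"
  let ?S = "{\<alpha> \<in> monomials n (r + d). d \<le> \<alpha> 0}"
  have "eval_hom n (r + d) v (sh d c) = (\<Sum>\<alpha>\<in>?S. sh d c \<alpha> * (\<Prod>i<n. v i ^ \<alpha> i))"
    unfolding eval_hom_def
    by (simp add: sum.inter_filter fin_mon) (rule sum.cong, auto simp: sh_def)
  also have "\<dots> = (\<Sum>\<beta>\<in>monomials n r. sh d c (?g \<beta>) * (\<Prod>i<n. v i ^ ?g \<beta> i))"
  proof (rule sum.reindex_bij_betw[symmetric])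
    show "bij_betw ?g (monomials n r) ?S"
    proof (rule bij_betwI[where g = "\<lambda>\<alpha>. \<alpha>(0 := \<alpha> 0 - d)"])
      show "?g \<in> monomials n r \<rightarrow> ?S"
      proof
        fix \<beta> assume b: "\<beta> \<in> monomials n r"
        show "?g \<beta> \<in> ?S" using b assms sum_shift[OF assms, of \<beta> d]
          by (auto simp: monomials_def)
      qed
      show "(\<lambda>\<alpha>. \<alpha>(0 := \<alpha> 0 - d)) \<in> ?S \<rightarrow> monomials n r"
      proof
        fix \<alpha> assume a: "\<alpha> \<in> ?S"
        let ?b = "\<alpha>(0 := \<alpha> 0 - d)"
        have e: "\<alpha> = ?b(0 := ?b 0 + d)" using a by auto
        have "(\<Sum>i<n. \<alpha> i) = (\<Sum>i<n. ?b i) + d" using sum_shift[OF assms(1), of ?b d] e by metis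
        then show "?b \<in> monomials n r" using a assms by (auto simp: monomials_def)
      qed
    qed auto
  qed
  also have "\<dots> = (\<Sum>\<beta>\<in>monomials n r. v 0 ^ d * (c \<beta> * (\<Prod>i<n. v i ^ \<beta> i)))"
  proof (rule sum.cong)
    fix \<beta> :: "nat \<Rightarrow> nat"
    have "sh d c (?g \<beta>) = c \<beta>" by (simp add: sh_def)
    thus "sh d c (?g \<beta>) * (\<Prod>i<n. v i ^ ?g \<beta> i) = v 0 ^ d * (c \<beta> * (\<Prod>i<n. v i ^ \<beta> i))"
      by (simp only: prod_shift[OF assms]) (simp add: mult_ac)
  qed simp
  also have "\<dots> = v 0 ^ d * eval_hom n r v c"
    by (simp add: eval_hom_def sum_distrib_left)
  finally show ?thesis .
qed

theorem lemma7p1: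
  fixes p q k n r t :: nat and F E :: "'a::field set" and L :: "'a poly" and v :: "nat \<Rightarrow> 'a"
  assumes "prime p" and "k \<ge> 1" and "q = p ^ k"
    and "of_nat p = (0::'a)"
    and "is_subfield F"
    and "card (Fq_in F q) = q"
    and "is_q_polynomial F q n L"
    and "is_splitting_field F E L"
    and "\<forall>x\<in>E. poly L x = 0 \<longrightarrow> order x L = 1"
    and "\<forall>i<n. v i \<in> E \<and> poly L (v i) = 0"
    and "\<forall>c. (\<forall>i<n. c i \<in> Fq_in F q) \<and> (\<Sum>i<n. c i * v i) = 0 \<longrightarrow> (\<forall>i<n. c i = 0)"
    and "\<forall>x\<in>E. poly L x = 0 \<longrightarrow> (\<exists>c. (\<forall>i<n. c i \<in> Fq_in F q) \<and> x = (\<Sum>i<n. c i * v i))"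
    and "r \<ge> 1"
    and "\<not> inj_on (eval_hom n r v) (hom_polys (Fq_in F q) n r)"
    and "t \<ge> r"
  shows "\<not> inj_on (eval_hom n t v) (hom_polys (Fq_in F q) n t)"
proof
  assume inj: "inj_on (eval_hom n t v) (hom_polys (Fq_in F q) n t)"
  let ?K = "Fq_in F q"
  have q0: "q \<noteq> 0" using assms(1,3) by (simp add: prime_gt_0_nat)
  have z: "0 \<in> ?K" using assms(5) q0 by (simp add: Fq_in_def is_subfield_def)
  have n1: "n \<ge> 1"
  proof (rule ccontr)
    assume "\<not> n \<ge> 1" hence "n = 0" by simp
    hence "monomials n r = {}" using assms(13) by (auto simp: monomials_def)
    hence "hom_polys ?K n r = {\<lambda>_. 0}" using z by (auto simp: hom_polys_def)
    thus False using assms(14) by simp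
  qed
  from assms(14) obtain c1 c2 where c: "c1 \<in> hom_polys ?K n r" "c2 \<in> hom_polys ?K n r"
    "c1 \<noteq> c2" "eval_hom n r v c1 = eval_hom n r v c2"
    unfolding inj_on_def by blast
  define d where "d = t - r"
  have t: "t = r + d" using assms(15) d_def by simp
  have "sh d c1 = sh d c2"
    using inj unfolding inj_on_def t
    using sh_hom[OF n1 z c(1)] sh_hom[OF n1 z c(2)] sh_eval[OF n1] c(4) by metis
  thus False using sh_inj c(3) by blast
qed

end
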